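(* Let $n\ge 5$. Then the strong metric dimension of $L(n)$ is $n(n-2)$.
   Context: For $n\ge 5$, $H(n)$ is the graph with vertex set $V_1\cup V_2$, where $V_1=\{v_1,\dots,v_n\}$ and $V_2=\{v_iv_j: 1\le i<j\le n\}$, and $v_r$ is adjacent to $v_iv_j$ iff $r\in\{i,j\}$ (no other edges). $L(n)$ is the line graph of $H(n)$: its vertices are the edges of $H(n)$, two being adjacent iff they share an endpoint. A set $Q\subseteq V(G)$ is a strong resolving set of $G$ if for any two distinct vertices $p,q$ there is $s\in Q$ such that $p$ lies on some shortest $q$–$s$ path or $q$ lies on some shortest $p$–$s$ path; the strong metric dimension is the minimum size of a strong resolving set. *)

theory Defs
  imports Main
begin

text \<open>Simple graphs given by a vertex set V and a symmetric adjacency relation E.\<close>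

definition walk :: "'a set \<Rightarrow> ('a \<Rightarrow> 'a \<Rightarrow> bool) \<Rightarrow> 'a list \<Rightarrow> bool" where
  "walk V E xs \<longleftrightarrow> xs \<noteq> [] \<and> set xs \<subseteq> V \<and> (\<forall>i. Suc i < length xs \<longrightarrow> E (xs ! i) (xs ! Suc i))"

text \<open>Distance = least number of edges of a walk from u to v (graphs considered are connected).\<close>
definition gdist :: "'a set \<Rightarrow> ('a \<Rightarrow> 'a \<Rightarrow> bool) \<Rightarrow> 'a \<Rightarrow> 'a \<Rightarrow> nat" where
  "gdist V E u v = (LEAST k. \<exists>xs. walk V E xs \<and> hd xs = u \<and> last xs = v \<and> length xs = Suc k)"

definition shortest_path :: "'a set \<Rightarrow> ('a \<Rightarrow> 'a \<Rightarrow> bool) \<Rightarrow> 'a \<Rightarrow> 'a \<Rightarrow> 'a list \<Rightarrow> bool" where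
  "shortest_path V E u v xs \<longleftrightarrow> walk V E xs \<and> hd xs = u \<and> last xs = v \<and> length xs = Suc (gdist V E u v)"

definition on_shortest_path :: "'a set \<Rightarrow> ('a \<Rightarrow> 'a \<Rightarrow> bool) \<Rightarrow> 'a \<Rightarrow> 'a \<Rightarrow> 'a \<Rightarrow> bool" where
  "on_shortest_path V E p q s \<longleftrightarrow> (\<exists>xs. shortest_path V E q s xs \<and> p \<in> set xs)"

definition strong_resolving_set :: "'a set \<Rightarrow> ('a \<Rightarrow> 'a \<Rightarrow> bool) \<Rightarrow> 'a set \<Rightarrow> bool" where
  "strong_resolving_set V E Q \<longleftrightarrow> Q \<subseteq> V \<and>
     (\<forall>p\<in>V. \<forall>q\<in>V. p \<noteq> q \<longrightarrow>
        (\<exists>s\<in>Q. on_shortest_path V E p q s \<or> on_shortest_path V E q p s))"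

definition strong_metric_dim :: "'a set \<Rightarrow> ('a \<Rightarrow> 'a \<Rightarrow> bool) \<Rightarrow> nat" where
  "strong_metric_dim V E = (LEAST k. \<exists>Q. strong_resolving_set V E Q \<and> card Q = k)"

definition line_V :: "'a set \<Rightarrow> ('a \<Rightarrow> 'a \<Rightarrow> bool) \<Rightarrow> 'a set set" where
  "line_V V E = {e. \<exists>u\<in>V. \<exists>v\<in>V. E u v \<and> e = {u, v}}"

definition line_E :: "'a set \<Rightarrow> 'a set \<Rightarrow> bool" where
  "line_E e f \<longleftrightarrow> e \<noteq> f \<and> e \<inter> f \<noteq> {}"

text \<open>H(n): vertices v_i = Inl i (1 \<le> i \<le> n) and v_iv_j = Inr {i,j}; v_r ~ v_iv_j iff r \<in> {i,j}.\<close>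
definition H_V :: "nat \<Rightarrow> (nat + nat set) set" where
  "H_V n = Inl ` {1..n} \<union> Inr ` {S. \<exists>i j. 1 \<le> i \<and> i < j \<and> j \<le> n \<and> S = {i, j}}"

definition H_E :: "nat \<Rightarrow> (nat + nat set) \<Rightarrow> (nat + nat set) \<Rightarrow> bool" where
  "H_E n x y \<longleftrightarrow> x \<in> H_V n \<and> y \<in> H_V n \<and>
     (\<exists>r S. r \<in> S \<and> ((x = Inl r \<and> y = Inr S) \<or> (x = Inr S \<and> y = Inl r)))"

definition L_V :: "nat \<Rightarrow> (nat + nat set) set set" where
  "L_V n = line_V (H_V n) (H_E n)"

abbreviation L_E :: "(nat + nat set) set \<Rightarrow> (nat + nat set) set \<Rightarrow> bool" where
  "L_E \<equiv> line_E"

end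

theory Submission
  imports Defs
begin

definition av :: "nat \<times> nat \<Rightarrow> (nat + nat set) set" where
  "av p = {Inl (fst p), Inr {fst p, snd p}}"

definition PP :: "nat \<Rightarrow> (nat \<times> nat) set" where
  "PP n = {(r,s). r \<in> {1..n} \<and> s \<in> {1..n} \<and> r \<noteq> s}"

definition dd :: "nat \<times> nat \<Rightarrow> nat \<times> nat \<Rightarrow> nat" where
  "dd p q = (if p = q then 0 else if fst p = fst q \<or> (fst q = snd p \<and> snd q = fst p) then 1
     else if fst q = snd p \<or> snd q = fst p then 2 else 3)"

lemma inj_av: "inj av"
proof (rule injI)
  fix p q assume "av p = av q"
  then have "Inl (fst p) \<in> av q" "Inr {fst p, snd p} \<in> av q" unfolding av_def by auto
  then have "fst p = fst q" "{fst p, snd p} = {fst q, snd q}" unfolding av_def by auto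
  then show "p = q" by (cases p, cases q) (auto simp: doubleton_eq_iff)
qed

lemma av_eq_iff[simp]: "av p = av q \<longleftrightarrow> p = q"
  using inj_av by (auto dest: injD)

lemma inv_av[simp]: "inv av (av p) = p"
  using inj_av by simp

lemma LV_eq: "L_V n = av ` PP n"
proof
  show "L_V n \<subseteq> av ` PP n"
  proof
    fix e assume "e \<in> L_V n"
    then obtain x y where xy: "x \<in> H_V n" "y \<in> H_V n" "H_E n x y" "e = {x, y}"
      unfolding L_V_def line_V_def by auto
    then obtain r S where rS: "r \<in> S" "(x = Inl r \<and> y = Inr S) \<or> (x = Inr S \<and> y = Inl r)"
      unfolding H_E_def by auto
    then have e: "e = {Inl r, Inr S}" and S: "Inr S \<in> H_V n" using xy by auto
    from S obtain i j where ij: "1 \<le> i" "i < j" "j \<le> n" "S = {i, j}" unfolding H_V_def by auto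
    show "e \<in> av ` PP n"
    proof (cases "r = i")
      case True
      then have "e = av (i, j)" using e ij by (simp add: av_def)
      moreover have "(i, j) \<in> PP n" using ij by (auto simp: PP_def)
      ultimately show ?thesis by blast
    next
      case False
      then have "r = j" using rS ij by auto
      then have "e = av (j, i)" using e ij by (auto simp: av_def insert_commute)
      moreover have "(j, i) \<in> PP n" using ij by (auto simp: PP_def)
      ultimately show ?thesis by blast
    qed
  qed
next
  show "av ` PP n \<subseteq> L_V n"
  proof
    fix e assume "e \<in> av ` PP n"
    then obtain r s where rs: "r \<in> {1..n}" "s \<in> {1..n}" "r \<noteq> s" "e = av (r, s)"
      unfolding PP_def by auto
    have S: "Inr {r, s} \<in> H_V n"
    proof (cases "r < s")
      case True then show ?thesis using rs unfolding H_V_def by auto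
    next
      case False
      then have "s < r" using rs by auto
      then have "\<exists>i j. 1 \<le> i \<and> i < j \<and> j \<le> n \<and> {r, s} = {i, j}"
        using rs by (intro exI[of _ s] exI[of _ r]) (auto simp: insert_commute)
      then show ?thesis unfolding H_V_def by blast
    qed
    have R: "Inl r \<in> H_V n" using rs unfolding H_V_def by auto
    have "H_E n (Inl r) (Inr {r, s})" using S R unfolding H_E_def by auto
    then show "e \<in> L_V n" using S R rs unfolding L_V_def line_V_def av_def by auto
  qed
qed

lemma adj: "line_E (av (r, s)) (av (t, u)) \<longleftrightarrow> (r, s) \<noteq> (t, u) \<and> (r = t \<or> (t = s \<and> u = r))"
proof -
  have "av (r, s) \<inter> av (t, u) \<noteq> {} \<longleftrightarrow> r = t \<or> {r, s} = {t, u}"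
    unfolding av_def by auto
  then show ?thesis unfolding line_E_def by (auto simp: doubleton_eq_iff)
qed

lemma walk_single[simp]: "walk V E [x] \<longleftrightarrow> x \<in> V"
  unfolding walk_def by auto

lemma walk_cons2[simp]: "walk V E (x # y # xs) \<longleftrightarrow> x \<in> V \<and> E x y \<and> walk V E (y # xs)"
proof
  assume w: "walk V E (x # y # xs)"
  have W: "\<forall>i. Suc i < length (x # y # xs) \<longrightarrow> E ((x # y # xs) ! i) ((x # y # xs) ! Suc i)"
    using w unfolding walk_def by blast
  have "E ((x # y # xs) ! 0) ((x # y # xs) ! Suc 0)" using W by auto
  then have "E x y" by simp
  moreover have "E ((y # xs) ! i) ((y # xs) ! Suc i)" if "Suc i < length (y # xs)" for i
  proof -
    have "E ((x # y # xs) ! Suc i) ((x # y # xs) ! Suc (Suc i))" using W that by auto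
    then show ?thesis by simp
  qed
  ultimately show "x \<in> V \<and> E x y \<and> walk V E (y # xs)" using w unfolding walk_def by auto
next
  assume a: "x \<in> V \<and> E x y \<and> walk V E (y # xs)"
  show "walk V E (x # y # xs)" unfolding walk_def
  proof (intro conjI allI impI)
    show "set (x # y # xs) \<subseteq> V" using a unfolding walk_def by auto
    fix i assume i: "Suc i < length (x # y # xs)"
    show "E ((x # y # xs) ! i) ((x # y # xs) ! Suc i)"
    proof (cases i)
      case 0 then show ?thesis using a by simp
    next
      case (Suc j) 
      have "E ((y # xs) ! j) ((y # xs) ! Suc j)" using a i Suc unfolding walk_def by simp
      then show ?thesis using Suc by simp
    qed
  qed simp
qed

lemma walk_take: "walk V E xs \<Longrightarrow> 0 < k \<Longrightarrow> walk V E (take k xs)"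
  unfolding walk_def using set_take_subset[of k xs] by (auto simp: nth_take)

lemma walk_drop: "walk V E xs \<Longrightarrow> i < length xs \<Longrightarrow> walk V E (drop i xs)"
  unfolding walk_def using set_drop_subset[of i xs] by (auto simp: nth_drop)

lemma walk_lower:
  assumes lip: "\<forall>x\<in>V. \<forall>y\<in>V. \<forall>w\<in>V. E x y \<longrightarrow> f x w \<le> Suc (f y w)"
    and zero: "\<forall>w\<in>V. f w w = 0"
  shows "walk V E xs \<Longrightarrow> f (hd xs) (last xs) \<le> length xs - 1"
proof (induction xs)
  case Nil then show ?case by (simp add: walk_def)
next
  case (Cons x rest)
  show ?case
  proof (cases rest)
    case Nil then show ?thesis using Cons zero by simp
  next
    case (Cons y ys)
    have w: "x \<in> V" "E x y" "walk V E (y # ys)" using Cons \<open>walk V E (x # rest)\<close> by auto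
    have IH: "f y (last rest) \<le> length rest - 1" using Cons.IH w Cons by simp
    have "last rest \<in> V" using w(3) Cons unfolding walk_def by auto
    moreover have "y \<in> V" using w(3) unfolding walk_def by auto
    ultimately have "f x (last rest) \<le> Suc (f y (last rest))" using lip w by blast
    then show ?thesis using IH Cons by simp
  qed
qed

lemma gdist_eqI:
  assumes lip: "\<forall>x\<in>V. \<forall>y\<in>V. \<forall>w\<in>V. E x y \<longrightarrow> f x w \<le> Suc (f y w)"
    and zero: "\<forall>w\<in>V. f w w = 0"
    and ex: "\<exists>xs. walk V E xs \<and> hd xs = u \<and> last xs = v \<and> length xs = Suc (f u v)"
  shows "gdist V E u v = f u v"
  unfolding gdist_def
proof (rule Least_equality)
  show "\<exists>xs. walk V E xs \<and> hd xs = u \<and> last xs = v \<and> length xs = Suc (f u v)" by (rule ex)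
next
  fix k assume "\<exists>xs. walk V E xs \<and> hd xs = u \<and> last xs = v \<and> length xs = Suc k"
  then obtain xs where "walk V E xs" "hd xs = u" "last xs = v" "length xs = Suc k" by blast
  then show "f u v \<le> k" using walk_lower[OF lip zero, where xs=xs] by auto
qed

lemma sp_split:
  assumes lip: "\<forall>x\<in>V. \<forall>y\<in>V. \<forall>w\<in>V. E x y \<longrightarrow> f x w \<le> Suc (f y w)"
    and zero: "\<forall>w\<in>V. f w w = 0"
    and g: "gdist V E q z = f q z"
    and sp: "shortest_path V E q z xs" and p: "p \<in> set xs"
  shows "f q p + f p z \<le> f q z"
proof -
  have w: "walk V E xs" "hd xs = q" "last xs = z" "length xs = Suc (f q z)"
    using sp g unfolding shortest_path_def by auto
  obtain i where i: "i < length xs" "xs ! i = p" using p by (auto simp: in_set_conv_nth)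
  have ne: "xs \<noteq> []" using w by auto
  have w1: "walk V E (take (Suc i) xs)" using walk_take[OF w(1)] by simp
  have "hd (take (Suc i) xs) = q" using w ne by simp
  moreover have "last (take (Suc i) xs) = p" using i by (simp add: take_Suc_conv_app_nth)
  moreover have "length (take (Suc i) xs) = Suc i" using i by simp
  ultimately have a1: "f q p \<le> i" using walk_lower[OF lip zero w1] by simp
  have w2: "walk V E (drop i xs)" using walk_drop[OF w(1) i(1)] .
  have "hd (drop i xs) = p" using i by (simp add: hd_drop_conv_nth)
  moreover have "last (drop i xs) = z" using i w by simp
  moreover have "length (drop i xs) = length xs - i" by simp
  ultimately have a2: "f p z \<le> length xs - i - 1" using walk_lower[OF lip zero w2] by simp
  show ?thesis using a1 a2 i w by linarith
qed

definition fL :: "(nat + nat set) set \<Rightarrow> (nat + nat set) set \<Rightarrow> nat" where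
  "fL x y = dd (inv av x) (inv av y)"

lemma fL_av[simp]: "fL (av p) (av q) = dd p q"
  by (simp add: fL_def)

lemma dd_simp: "dd (r,s) (t,u) = (if r = t \<and> s = u then 0 else if r = t \<or> (t = s \<and> u = r) then 1
     else if t = s \<or> u = r then 2 else 3)"
  by (simp add: dd_def)
lemma dd_le3: "dd p q \<le> 3" by (simp add: dd_def)
lemma dd_le2: "(a,b)=(e,f) \<or> a=e \<or> e=b \<or> f=a \<Longrightarrow> dd (a,b) (e,f) \<le> 2"
  unfolding dd_simp by auto
lemma dd_1D: "dd (c,d) (e,f) = 1 \<Longrightarrow> c=e \<or> (e=d \<and> f=c)"
  unfolding dd_simp by (simp split: if_splits)
lemma dd_0D: "dd (c,d) (e,f) = 0 \<Longrightarrow> c=e \<and> d = f"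
  unfolding dd_simp by (simp split: if_splits)
lemma dd_lip: "line_E (av (a,b)) (av (c,d)) \<Longrightarrow> dd (a,b) (e,f) \<le> Suc (dd (c,d) (e,f))"
proof -
  assume "line_E (av (a,b)) (av (c,d))"
  then have A: "(a,b) \<noteq> (c,d)" "a = c \<or> (c = b \<and> d = a)" unfolding adj by auto
  consider "dd (c,d) (e,f) = 0" | "dd (c,d) (e,f) = 1" | "dd (c,d) (e,f) \<ge> 2" by (cases "dd (c,d) (e,f)"; cases "dd (c,d) (e,f) - 1"; simp)
  then show ?thesis
  proof cases
    case 1
    then have "c = e \<and> d = f" by (rule dd_0D)
    then have "c = e" "d = f" by auto
    have "dd (a,b) (c,d) = 1" using A unfolding dd_simp by simp
    then show ?thesis using \<open>c = e\<close> \<open>d = f\<close> by simp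
  next
    case 2
    then have "c=e \<or> (e=d \<and> f=c)" by (rule dd_1D)
    then have "(a,b)=(e,f) \<or> a=e \<or> e=b \<or> f=a" using A(2) by (elim disjE conjE; simp)
    then have "dd (a,b) (e,f) \<le> 2" by (rule dd_le2)
    then show ?thesis using 2 by linarith
  next
    case 3 then show ?thesis using dd_le3[of "(a,b)" "(e,f)"] by linarith
  qed
qed

lemma dd_lipP: "line_E (av p) (av q) \<Longrightarrow> dd p w \<le> Suc (dd q w)"
  using dd_lip[of "fst p" "snd p" "fst q" "snd q" "fst w" "snd w"] by simp

lemma dd_0: "dd p q = 0 \<longleftrightarrow> p = q" by (simp add: dd_def)

lemma lipL: "\<forall>x\<in>L_V n. \<forall>y\<in>L_V n. \<forall>w\<in>L_V n. line_E x y \<longrightarrow> fL x w \<le> Suc (fL y w)"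
  unfolding LV_eq using dd_lipP by auto

lemma zeroL: "\<forall>w\<in>L_V n. fL w w = 0"
  unfolding LV_eq by (auto simp: dd_def)

lemma PP_iff: "(r, s) \<in> PP n \<longleftrightarrow> 1 \<le> r \<and> r \<le> n \<and> 1 \<le> s \<and> s \<le> n \<and> r \<noteq> s"
  by (auto simp: PP_def)

lemma av_in[simp]: "av p \<in> L_V n \<longleftrightarrow> p \<in> PP n"
  unfolding LV_eq by auto

lemma exwalk:
  assumes p: "p \<in> PP n" and q: "q \<in> PP n"
  shows "\<exists>xs. walk (L_V n) line_E xs \<and> hd xs = av p \<and> last xs = av q \<and> length xs = Suc (dd p q)"
proof -
  obtain r s where ps: "p = (r, s)" by (cases p)
  obtain t u where qs: "q = (t, u)" by (cases q)
  note R = p q ps qs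
  consider "dd p q = 0" | "dd p q = 1" | "dd p q = 2 \<and> t = s" | "dd p q = 2 \<and> t \<noteq> s \<and> u = r"
    | "dd p q = 3"
    using dd_le3[of p q] R by (auto simp: dd_def split: if_splits)
  then show ?thesis
  proof cases
    case 1
    then show ?thesis using R by (intro exI[of _ "[av p]"]) (simp add: dd_0)
  next
    case 2
    then show ?thesis using R
      by (intro exI[of _ "[av p, av q]"]) (auto simp: adj dd_def split: if_splits)
  next
    case 3
    then show ?thesis using R
      by (intro exI[of _ "[av (r, s), av (s, r), av (s, u)]"]) (auto simp: adj dd_def PP_iff split: if_splits)
  next
    case 4
    then show ?thesis using R
      by (intro exI[of _ "[av (r, s), av (r, t), av (t, r)]"]) (auto simp: adj dd_def PP_iff split: if_splits)
  next
    case 5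
    then show ?thesis using R
      by (intro exI[of _ "[av (r, s), av (r, t), av (t, r), av (t, u)]"]) (auto simp: adj dd_def PP_iff split: if_splits)
  qed
qed

lemma gdL: "p \<in> PP n \<Longrightarrow> q \<in> PP n \<Longrightarrow> gdist (L_V n) line_E (av p) (av q) = dd p q"
  using gdist_eqI[OF lipL zeroL, where u="av p" and v="av q"] exwalk[of p n q] by simp

lemma spL: "p \<in> PP n \<Longrightarrow> q \<in> PP n \<Longrightarrow> walk (L_V n) line_E xs \<Longrightarrow> hd xs = av p \<Longrightarrow> last xs = av q
  \<Longrightarrow> length xs = Suc (dd p q) \<Longrightarrow> shortest_path (L_V n) line_E (av p) (av q) xs"
  unfolding shortest_path_def by (simp add: gdL)

lemma sp_ex: "x \<in> L_V n \<Longrightarrow> y \<in> L_V n \<Longrightarrow> \<exists>xs. shortest_path (L_V n) line_E x y xs"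
proof -
  assume "x \<in> L_V n" "y \<in> L_V n"
  then obtain p q where "p \<in> PP n" "q \<in> PP n" "x = av p" "y = av q" unfolding LV_eq by auto
  then show ?thesis using exwalk[of p n q] spL[of p n q] by blast
qed

lemma split_L:
  assumes "shortest_path (L_V n) line_E (av q) (av z) xs" "av p \<in> set xs" "q \<in> PP n" "z \<in> PP n"
  shows "dd q p + dd p z \<le> dd q z"
  using sp_split[OF lipL[of n] zeroL[of n], where q="av q" and z="av z" and xs=xs and p="av p"] assms gdL[of q n z] by simp

lemma PP_alt: "PP n = ({1..n} \<times> {1..n}) - (\<lambda>r. (r, r)) ` {1..n}"
  unfolding PP_def by auto

lemma fin_PP: "finite (PP n)" unfolding PP_alt by simp

lemma card_PP: "card (PP n) = n * n - n"
proof -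
  have "card ((\<lambda>r. (r, r)) ` {1..n}) = n" by (simp add: card_image inj_on_def)
  moreover have "(\<lambda>r. (r, r)) ` {1..n} \<subseteq> {1..n} \<times> {1..n}" by auto
  ultimately show ?thesis unfolding PP_alt by (simp add: card_Diff_subset card_cartesian_product)
qed

lemma fin_LV: "finite (L_V n)" unfolding LV_eq using fin_PP by simp

lemma card_LV: "card (L_V n) = n * n - n"
  unfolding LV_eq using card_PP card_image[OF inj_on_subset[OF inj_av subset_UNIV]] by simp

lemma sp_last: "shortest_path V E q p xs \<Longrightarrow> p \<in> set xs"
  unfolding shortest_path_def walk_def by auto

lemma lower:
  assumes srs: "strong_resolving_set (L_V n) L_E Q"
  shows "n * n - n - n \<le> card Q"
proof -
  have QV: "Q \<subseteq> L_V n" using srs unfolding strong_resolving_set_def by auto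
  define W where "W = L_V n - Q"
  have inj: "inj_on (\<lambda>x. snd (inv av x)) W"
  proof (rule inj_onI)
    fix x y assume xW: "x \<in> W" and yW: "y \<in> W" and h: "snd (inv av x) = snd (inv av y)"
    show "x = y"
    proof (rule ccontr)
      assume xy: "x \<noteq> y"
      obtain p where p: "p \<in> PP n" "x = av p" using xW unfolding W_def LV_eq by auto
      obtain q where q: "q \<in> PP n" "y = av q" using yW unfolding W_def LV_eq by auto
      obtain r s where ps: "p = (r, s)" by (cases p)
      obtain t where qs: "q = (t, s)" using h p q ps by (cases q) auto
      have rt: "r \<noteq> t" using xy p q ps qs by auto
      have "r \<noteq> s" "t \<noteq> s" using p q ps qs by (auto simp: PP_iff)
      then have d3: "dd p q = 3" "dd q p = 3" using rt ps qs by (auto simp: dd_simp)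
      have "x \<in> L_V n" "y \<in> L_V n" using xW yW unfolding W_def by auto
      moreover have R: "\<forall>p\<in>L_V n. \<forall>q\<in>L_V n. p \<noteq> q \<longrightarrow>
        (\<exists>s\<in>Q. on_shortest_path (L_V n) L_E p q s \<or> on_shortest_path (L_V n) L_E q p s)"
        using srs unfolding strong_resolving_set_def by (elim conjE)
      ultimately have "\<exists>s\<in>Q. on_shortest_path (L_V n) L_E x y s \<or> on_shortest_path (L_V n) L_E y x s"
        using xy by blast
      then obtain z where zQ: "z \<in> Q" and
        oz: "on_shortest_path (L_V n) L_E x y z \<or> on_shortest_path (L_V n) L_E y x z"
        by blast
      obtain w where w: "w \<in> PP n" "z = av w" using zQ QV unfolding LV_eq by auto
      have "x \<noteq> z" "y \<noteq> z" using xW yW zQ unfolding W_def by auto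
      then have nz: "dd p w \<noteq> 0" "dd q w \<noteq> 0" using p q w by (auto simp: dd_0)
      from oz show False
      proof
        assume "on_shortest_path (L_V n) L_E x y z"
        then obtain xs where "shortest_path (L_V n) L_E (av q) (av w) xs" "av p \<in> set xs"
          unfolding on_shortest_path_def using p q w by auto
        then have "dd q p + dd p w \<le> dd q w" using split_L q(1) w(1) by blast
        then show False using d3 nz dd_le3[of q w] by simp
      next
        assume "on_shortest_path (L_V n) L_E y x z"
        then obtain xs where "shortest_path (L_V n) L_E (av p) (av w) xs" "av q \<in> set xs"
          unfolding on_shortest_path_def using p q w by auto
        then have "dd p q + dd q w \<le> dd p w" using split_L p(1) w(1) by blast
        then show False using d3 nz dd_le3[of p w] by simp
      qed
    qed
  qed
  have "(\<lambda>x. snd (inv av x)) ` W \<subseteq> {1..n}"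
  proof
    fix y assume "y \<in> (\<lambda>x. snd (inv av x)) ` W"
    then obtain p where "p \<in> PP n" "y = snd p" unfolding W_def LV_eq by auto
    then show "y \<in> {1..n}" by (cases p) (simp add: PP_iff)
  qed
  then have "card W \<le> card {1..n}" by (rule card_inj_on_le[OF inj]) simp
  then have cW: "card W \<le> n" by simp
  have "card (L_V n) = card Q + card W"
    unfolding W_def using QV fin_LV
    by (metis card_Diff_subset card_mono diff_add_inverse le_add_diff_inverse finite_subset)
  then show ?thesis using cW card_LV[of n] by linarith
qed

lemma osp_intro:
  assumes "a \<in> PP n" "w \<in> PP n" "walk (L_V n) L_E xs" "hd xs = av a" "last xs = av w"
    "length xs = Suc (dd a w)" "av b \<in> set xs"
  shows "on_shortest_path (L_V n) L_E (av b) (av a) (av w)"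
  unfolding on_shortest_path_def using spL[OF assms(1-6)] assms(7) by blast

definition S0 :: "nat \<Rightarrow> (nat \<times> nat) set" where
  "S0 n = insert (2, 1) ((\<lambda>s. (1, s)) ` {2..n})"

lemma S0_PP: "2 \<le> n \<Longrightarrow> S0 n \<subseteq> PP n"
  unfolding S0_def PP_def by auto

lemma card_S0: "2 \<le> n \<Longrightarrow> card (S0 n) = n"
proof -
  assume n: "2 \<le> n"
  have "card ((\<lambda>s. (1::nat, s)) ` {2..n}) = n - 1" by (simp add: card_image inj_on_def)
  moreover have "(2, 1) \<notin> (\<lambda>s. (1::nat, s)) ` {2..n}" by auto
  ultimately show ?thesis unfolding S0_def using n by simp
qed

lemma key11:
  assumes n: "3 \<le> n" and s: "s \<in> {2..n}" and t: "t \<in> {2..n}" and st: "s \<noteq> t"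
  shows "\<exists>w. w \<in> PP n \<and> w \<notin> S0 n \<and> on_shortest_path (L_V n) L_E (av (1, t)) (av (1, s)) (av w)"
proof -
  define x where "x = (if t = 2 then 3 else 2::nat)"
  have x: "x \<noteq> 1" "x \<noteq> t" "x \<in> {1..n}" using n t unfolding x_def by auto
  have t1: "t \<noteq> 1" "t \<in> {1..n}" using t by auto
  have w: "(t, x) \<in> PP n" "(t, x) \<notin> S0 n" using x t1 unfolding PP_iff S0_def by auto
  have d: "dd (Suc 0, s) (t, x) = 3" using x(1) t1(1) st by (simp add: dd_simp)
  have P: "(1, s) \<in> PP n" "(1, t) \<in> PP n" "(t, 1) \<in> PP n" using s t by (auto simp: PP_iff)
  have W: "walk (L_V n) L_E [av (1, s), av (1, t), av (t, 1), av (t, x)]"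
    using P w x st t by (simp add: adj)
  have "on_shortest_path (L_V n) L_E (av (1, t)) (av (1, s)) (av (t, x))"
    by (rule osp_intro[OF P(1) w(1) W]) (simp_all add: d)
  then show ?thesis using w by blast
qed

lemma key12:
  assumes n: "3 \<le> n" and s: "s \<in> {2..n}"
  shows "on_shortest_path (L_V n) L_E (av (2, 1)) (av (1, s)) (av (2, 3))"
proof -
  have P: "(1, s) \<in> PP n" "(2, 1) \<in> PP n" "(2, 3) \<in> PP n" "(1, 2) \<in> PP n" using s n by (auto simp: PP_iff)
  show ?thesis
  proof (cases "s = 2")
    case True
    have W: "walk (L_V n) L_E [av (1, 2), av (2, 1), av (2, 3)]" using P by (simp add: adj)
    have "on_shortest_path (L_V n) L_E (av (2, 1)) (av (1, 2)) (av (2, 3))"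
      by (rule osp_intro[OF P(4) P(3) W]) (simp_all add: dd_simp)
    then show ?thesis using True by simp
  next
    case False
    have W: "walk (L_V n) L_E [av (1, s), av (1, 2), av (2, 1), av (2, 3)]" using P False by (simp add: adj)
    have "dd (Suc 0, s) (2, 3) = 3" using False by (simp add: dd_simp)
    then show ?thesis
      by (intro osp_intro[OF P(1) P(3) W]) simp_all
  qed
qed

lemma keyW:
  assumes n: "3 \<le> n" and a: "a \<in> S0 n" and b: "b \<in> S0 n" and ab: "a \<noteq> b"
  shows "\<exists>w. w \<in> PP n \<and> w \<notin> S0 n \<and>
    (on_shortest_path (L_V n) L_E (av a) (av b) (av w) \<or> on_shortest_path (L_V n) L_E (av b) (av a) (av w))"
proof -
  have w23: "(2, 3) \<in> PP n" "(2::nat, 3::nat) \<notin> S0 n" using n unfolding PP_def S0_def by auto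
  consider (A) s t where "a = (1, s)" "b = (1, t)" "s \<in> {2..n}" "t \<in> {2..n}"
    | (B) s where "a = (1, s)" "b = (2, 1)" "s \<in> {2..n}"
    | (C) s where "a = (2, 1)" "b = (1, s)" "s \<in> {2..n}"
    | (D) "a = (2, 1)" "b = (2, 1)"
    using a b unfolding S0_def by blast
  then show ?thesis
  proof cases
    case A
    then show ?thesis using key11[OF n A(3) A(4)] ab by blast
  next
    case B
    then show ?thesis using key12[OF n B(3)] w23 by blast
  next
    case C
    then show ?thesis using key12[OF n C(3)] w23 by blast
  next
    case D
    then show ?thesis using ab by simp
  qed
qed

lemma upper:
  assumes n: "3 \<le> n"
  shows "strong_resolving_set (L_V n) L_E (L_V n - av ` S0 n)"
  unfolding strong_resolving_set_def
proof (intro conjI ballI impI)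
  show "L_V n - av ` S0 n \<subseteq> L_V n" by blast
next
  fix p q assume p: "p \<in> L_V n" and q: "q \<in> L_V n" and pq: "p \<noteq> q"
  let ?Q = "L_V n - av ` S0 n"
  show "\<exists>s\<in>?Q. on_shortest_path (L_V n) L_E p q s \<or> on_shortest_path (L_V n) L_E q p s"
  proof (cases "p \<in> ?Q")
    case True
    obtain xs where X: "shortest_path (L_V n) L_E q p xs" using sp_ex[OF q p] by blast
    have "on_shortest_path (L_V n) L_E p q p" unfolding on_shortest_path_def using X sp_last[OF X] by blast
    then show ?thesis using True by blast
  next
    case pF: False
    show ?thesis
    proof (cases "q \<in> ?Q")
      case True
      obtain xs where X: "shortest_path (L_V n) L_E p q xs" using sp_ex[OF p q] by blast
      have "on_shortest_path (L_V n) L_E q p q" unfolding on_shortest_path_def using X sp_last[OF X] by blast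
      then show ?thesis using True by blast
    next
      case False
      obtain a where a: "a \<in> S0 n" "p = av a" using pF p by blast
      obtain b where b: "b \<in> S0 n" "q = av b" using False q by blast
      have "a \<noteq> b" using a b pq by blast
      then obtain w where w: "w \<in> PP n" "w \<notin> S0 n"
        "on_shortest_path (L_V n) L_E (av a) (av b) (av w) \<or> on_shortest_path (L_V n) L_E (av b) (av a) (av w)"
        using keyW[OF n a(1) b(1)] by blast
      have "av w \<in> ?Q" using w(1,2) by (simp add: image_iff)
      then show ?thesis using w(3) a b by blast
    qed
  qed
qed

theorem theorem3p10:
  fixes n :: nat
  assumes "n \<ge> 5"
  shows "strong_metric_dim (L_V n) L_E = n * (n - 2)"
  unfolding strong_metric_dim_def
proof (rule Least_equality)
  have n: "3 \<le> n" "2 \<le> n" using assms by auto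
  have sub: "av ` S0 n \<subseteq> L_V n" using S0_PP[OF n(2)] by auto
  have cW: "card (av ` S0 n) = n"
    using card_S0[OF n(2)] card_image[OF inj_on_subset[OF inj_av subset_UNIV]] by simp
  have "card (L_V n - av ` S0 n) = n * n - n - n"
    using card_Diff_subset[OF finite_subset[OF sub fin_LV] sub] cW card_LV[of n] by simp
  moreover have "n * n - n - n = n * (n - 2)" by (simp add: diff_mult_distrib2)
  ultimately show "\<exists>Q. strong_resolving_set (L_V n) L_E Q \<and> card Q = n * (n - 2)"
    using upper[OF n(1)] by metis
next
  fix k assume "\<exists>Q. strong_resolving_set (L_V n) L_E Q \<and> card Q = k"
  then obtain Q where "strong_resolving_set (L_V n) L_E Q" "card Q = k" by blast
  then have "n * n - n - n \<le> k" using lower by blast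
  moreover have "n * n - n - n = n * (n - 2)" by (simp add: diff_mult_distrib2)
  ultimately show "n * (n - 2) \<le> k" by simp
qed

end
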